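(* Let $S\subseteq\mathbb{R}[\underline x]$. If $\operatorname{QM}(S)$ is archimedean in $\mathbb{R}[\underline x]$, then $\operatorname{qm}(S,\emptyset)$ is archimedean in $\mathscr{M}$ and $\operatorname{QM}(S,\emptyset)$ is archimedean in $\mathscr{M}[\underline x]$.
   Context: Let $\mathbb{R}[\underline x]=\mathbb{R}[x_1,\dots,x_n]$, $\mathscr{M}=\mathbb{R}[\mathtt{m}_{i_1,\dots,i_n}\colon (i_1,\dots,i_n)\in\mathbb{N}_0^n]$ the polynomial ring in countably many indeterminates with $\mathtt{m}_{0,\dots,0}:=1$, $\mathscr{M}[\underline x]=\mathscr{M}\otimes_{\mathbb{R}}\mathbb{R}[\underline x]$, and $\mathtt{m}:\mathscr{M}[\underline x]\to\mathscr{M}$ the unique $\mathscr{M}$-linear map with $\mathtt{m}(x_1^{i_1}\cdots x_n^{i_n})=\mathtt{m}_{i_1,\dots,i_n}$. A quadratic module in a commutative unital ring $A$ is a subset $M$ with $1\in M$, $M+M\subseteq M$, $a^2M\subseteq M$ for $a\in A$; it is archimedean if for every $a\in A$ there is $N\in\mathbb{N}$ with $N\pm a\in M$. $\operatorname{QM}(S)$ is the quadratic module of $\mathbb{R}[\underline x]$ generated by $S$; $\operatorname{qm}(S,\emptyset)$ is the quadratic module of $\mathscr{M}$ generated by $\{\mathtt{m}(f^2s)\colon s\in\{1\}\cup S,\ f\in\mathscr{M}[\underline x]\}$; $\operatorname{QM}(S,\emptyset)$ is the quadratic module of $\mathscr{M}[\underline x]$ generated by $S\cup\{\mathtt{m}(f^2s)\colon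 s\in\{1\}\cup S,\ f\in\mathscr{M}[\underline x]\}$. *)

theory Defs
  imports Complex_Main "HOL-Library.Poly_Mapping"
begin

inductive_set qm_gen :: "'a::comm_ring_1 set \<Rightarrow> 'a set \<Rightarrow> 'a set"
  for A :: "'a set" and G :: "'a set" where
  one: "1 \<in> qm_gen A G"
| gen: "g \<in> G \<Longrightarrow> g \<in> qm_gen A G"
| add: "p \<in> qm_gen A G \<Longrightarrow> q \<in> qm_gen A G \<Longrightarrow> p + q \<in> qm_gen A G"
| sq:  "a \<in> A \<Longrightarrow> p \<in> qm_gen A G \<Longrightarrow> a * a * p \<in> qm_gen A G"

definition archimedean_in :: "'a::comm_ring_1 set \<Rightarrow> 'a set \<Rightarrow> bool" where
  "archimedean_in A M \<longleftrightarrow> (\<forall>a\<in>A. \<exists>N::nat. of_nat N + a \<in> M \<and> of_nat N - a \<in> M)"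

text \<open>Variables x_i are indexed by a finite type 'v (n = CARD('v)); exponent vectors
  (i_1,...,i_n) are elements of 'v =>0 nat.\<close>

type_synonym 'v mon = "'v \<Rightarrow>\<^sub>0 nat"
type_synonym 'v rpoly = "'v mon \<Rightarrow>\<^sub>0 real"
type_synonym 'v mring = "('v mon \<Rightarrow>\<^sub>0 nat) \<Rightarrow>\<^sub>0 real"  \<comment> \<open>ambient ring for M\<close>
type_synonym 'v mxpoly = "'v mon \<Rightarrow>\<^sub>0 'v mring"        \<comment> \<open>ambient ring for M[x]\<close>

text \<open>M = R[m_\<alpha> : \<alpha> \<noteq> 0] (since m_0 := 1): polynomials in indeterminates indexed by
  exponent vectors, in which the indeterminate indexed by 0 does not occur.\<close>
definition Mcar :: "'v mring set" where
  "Mcar = {p. \<forall>\<mu>\<in>Poly_Mapping.keys p. Poly_Mapping.lookup \<mu> 0 = 0}"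

definition mvar :: "'v mon \<Rightarrow> 'v mring" where
  "mvar \<alpha> = (if \<alpha> = 0 then 1 else Poly_Mapping.single (Poly_Mapping.single \<alpha> 1) 1)"

definition MXcar :: "'v mxpoly set" where
  "MXcar = {p. \<forall>\<alpha>. Poly_Mapping.lookup p \<alpha> \<in> Mcar}"

definition mlin :: "'v mxpoly \<Rightarrow> 'v mring" where
  "mlin p = (\<Sum>\<alpha>\<in>Poly_Mapping.keys p. Poly_Mapping.lookup p \<alpha> * mvar \<alpha>)"

definition emb_R :: "'v rpoly \<Rightarrow> 'v mxpoly" where
  "emb_R p = Poly_Mapping.map (\<lambda>c. Poly_Mapping.single 0 c) p"

definition emb_M :: "'v mring \<Rightarrow> 'v mxpoly" where
  "emb_M c = Poly_Mapping.single 0 c"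

definition QM :: "'v rpoly set \<Rightarrow> 'v rpoly set" where
  "QM S = qm_gen UNIV S"

definition mgens :: "'v rpoly set \<Rightarrow> 'v mring set" where
  "mgens S = {mlin (f * f * emb_R s) | f s. f \<in> MXcar \<and> s \<in> insert 1 S}"

definition qm_M :: "'v rpoly set \<Rightarrow> 'v mring set" where
  "qm_M S = qm_gen Mcar (mgens S)"

definition QM_MX :: "'v rpoly set \<Rightarrow> 'v mxpoly set" where
  "QM_MX S = qm_gen MXcar (emb_R ` S \<union> emb_M ` mgens S)"

end

theory Submission
  imports Defs
begin


definition bnd :: "'a::comm_ring_1 set \<Rightarrow> 'a \<Rightarrow> bool" where
  "bnd M a \<longleftrightarrow> (\<exists>N::nat. of_nat N + a \<in> M \<and> of_nat N - a \<in> M)"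

locale qmsetup =
  fixes A :: "'a::comm_ring_1 set" and phi :: "real \<Rightarrow> 'a"
  assumes phiA: "phi c \<in> A"
    and addA: "a \<in> A \<Longrightarrow> b \<in> A \<Longrightarrow> a + b \<in> A"
    and negA: "a \<in> A \<Longrightarrow> - a \<in> A"
    and phi_add: "phi (x + y) = phi x + phi y"
    and phi_mult: "phi (x * y) = phi x * phi y"
    and phi_one: "phi 1 = 1"
begin

lemma phi_zero: "phi 0 = 0"
  using phi_add[of 0 0] by simp

lemma phi_nat: "phi (of_nat n) = of_nat n"
  by (induction n) (simp_all add: phi_zero phi_add phi_one)

lemma natA: "of_nat n \<in> A"
  using phiA[of "of_nat n"] by (simp add: phi_nat)

lemma zeroA: "0 \<in> A" using natA[of 0] by simp

lemma diffA: assumes "a \<in> A" "b \<in> A" shows "a - b \<in> A"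
proof -
  have "a + - b \<in> A" by (rule addA[OF assms(1) negA[OF assms(2)]])
  then show ?thesis by simp
qed

lemma nat_in: "of_nat n \<in> qm_gen A G"
proof (induction n)
  case 0
  have "0 * 0 * 1 \<in> qm_gen A G" by (rule qm_gen.sq[OF zeroA qm_gen.one])
  then show ?case by simp
next
  case (Suc n)
  show ?case using qm_gen.add[OF qm_gen.one Suc] by simp
qed

lemma phi_neg: "phi (- x) = - phi x"
  using phi_add[of x "- x"] phi_zero by (simp add: eq_neg_iff_add_eq_0 add.commute)

lemma bnd_phi_aux: "real N \<ge> \<bar>c\<bar> \<Longrightarrow> of_nat N + phi c \<in> qm_gen A G"
proof -
  assume N: "real N \<ge> \<bar>c\<bar>"
  define t where "t = sqrt (real N + c)"
  have t: "t * t = real N + c" unfolding t_def using N by simp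
  have "phi t * phi t * 1 \<in> qm_gen A G" by (rule qm_gen.sq[OF phiA qm_gen.one])
  also have "phi t * phi t * 1 = phi (t * t)" by (simp add: phi_mult)
  also have "\<dots> = of_nat N + phi c" by (simp add: t phi_add phi_nat)
  finally show ?thesis .
qed

lemma bnd_phi: "bnd (qm_gen A G) (phi c)"
proof -
  define N where "N = nat (ceiling \<bar>c\<bar>)"
  have N: "real N \<ge> \<bar>c\<bar>" unfolding N_def by linarith
  have 1: "of_nat N + phi c \<in> qm_gen A G" using N by (intro bnd_phi_aux) simp
  have "of_nat N + phi (- c) \<in> qm_gen A G" using N by (intro bnd_phi_aux) simp
  then have 2: "of_nat N - phi c \<in> qm_gen A G" by (simp add: phi_neg)
  show ?thesis unfolding bnd_def using 1 2 by blast
qed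

lemma bnd_add: assumes ba: "bnd (qm_gen A G) a" and bb: "bnd (qm_gen A G) b"
  shows "bnd (qm_gen A G) (a + b)"
proof -
  obtain N where N: "of_nat N + a \<in> qm_gen A G" "of_nat N - a \<in> qm_gen A G"
    using ba unfolding bnd_def by blast
  obtain K where K: "of_nat K + b \<in> qm_gen A G" "of_nat K - b \<in> qm_gen A G"
    using bb unfolding bnd_def by blast
  have 1: "(of_nat N + a) + (of_nat K + b) \<in> qm_gen A G" by (rule qm_gen.add[OF N(1) K(1)])
  have 2: "(of_nat N - a) + (of_nat K - b) \<in> qm_gen A G" by (rule qm_gen.add[OF N(2) K(2)])
  have e1: "(of_nat N + a) + (of_nat K + b) = of_nat (N + K) + (a + b)" by (simp add: algebra_simps)
  have e2: "(of_nat N - a) + (of_nat K - b) = of_nat (N + K) - (a + b)" by (simp add: algebra_simps)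
  show ?thesis unfolding bnd_def using 1 2 unfolding e1 e2 by blast
qed

lemma bnd_neg: "bnd M a \<Longrightarrow> bnd M (- a)"
  unfolding bnd_def by auto

lemma inv_sq: "n > 0 \<Longrightarrow> phi (1 / sqrt (real n)) * phi (1 / sqrt (real n)) * of_nat n = 1"
proof -
  assume n: "n > 0"
  have "phi (1 / sqrt (real n)) * phi (1 / sqrt (real n)) * of_nat n
      = phi (1 / sqrt (real n) * (1 / sqrt (real n)) * real n)"
    by (simp only: phi_mult phi_nat)
  also have "1 / sqrt (real n) * (1 / sqrt (real n)) * real n = 1"
    using n by (simp add: field_simps)
  also have "phi 1 = 1" by (rule phi_one)
  finally show ?thesis .
qed

lemma bnd_sq: assumes aA: "a \<in> A" and b: "bnd (qm_gen A G) a"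
  shows "bnd (qm_gen A G) (a * a)"
proof -
  let ?M = "qm_gen A G"
  obtain N where N: "of_nat N + a \<in> ?M" "of_nat N - a \<in> ?M" using b unfolding bnd_def by blast
  define K where "K = Suc N"
  have K: "of_nat K + a \<in> ?M" "of_nat K - a \<in> ?M"
    using qm_gen.add[OF qm_gen.one N(1)] qm_gen.add[OF qm_gen.one N(2)]
    by (simp_all add: K_def algebra_simps)
  define u where "u = of_nat K + a"
  define v where "v = of_nat K - a"
  have uA: "u \<in> A" "v \<in> A" unfolding u_def v_def using aA natA addA diffA by auto
  have "u * u * v + v * v * u \<in> ?M"
    using K uA unfolding u_def[symmetric] v_def[symmetric]
    by (intro qm_gen.add[OF qm_gen.sq qm_gen.sq]) auto
  define r where "r = phi (1 / sqrt (real (2 * K)))"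
  have r: "r * r * of_nat (2 * K) = 1" unfolding r_def by (rule inv_sq) (simp add: K_def)
  have "r * r * (u * u * v + v * v * u) \<in> ?M"
    using \<open>u * u * v + v * v * u \<in> ?M\<close> by (rule qm_gen.sq[OF phiA[of "1 / sqrt (real (2 * K))"], folded r_def])
  also have "u * u * v + v * v * u = of_nat (2 * K) * (of_nat (K * K) - a * a)"
    unfolding u_def v_def by (simp add: algebra_simps)
  also have "r * r * (of_nat (2 * K) * (of_nat (K * K) - a * a)) = (r * r * of_nat (2 * K)) * (of_nat (K * K) - a * a)"
    by (simp add: ac_simps)
  finally have 1: "of_nat (K * K) - a * a \<in> ?M" using r by simp
  have "of_nat (K * K) + a * a * 1 \<in> ?M"
    by (rule qm_gen.add[OF nat_in qm_gen.sq[OF aA qm_gen.one]])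
  then have 2: "of_nat (K * K) + a * a \<in> ?M" by simp
  show ?thesis unfolding bnd_def using 1 2 by blast
qed

lemma bnd_mult: assumes aA: "a \<in> A" and bA: "b \<in> A"
  and ba: "bnd (qm_gen A G) a" and bb: "bnd (qm_gen A G) b"
  shows "bnd (qm_gen A G) (a * b)"
proof -
  let ?M = "qm_gen A G"
  have "bnd ?M ((a + b) * (a + b))"
    by (rule bnd_sq[OF addA[OF aA bA] bnd_add[OF ba bb]])
  moreover have "bnd ?M ((a - b) * (a - b))"
    using bnd_add[OF ba bnd_neg[OF bb]] by (intro bnd_sq) (auto intro: diffA aA bA)
  ultimately have "bnd ?M ((a + b) * (a + b) + - ((a - b) * (a - b)))"
    by (intro bnd_add bnd_neg) auto
  moreover have "(a + b) * (a + b) + - ((a - b) * (a - b)) = of_nat 4 * (a * b)"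
    by (simp add: algebra_simps)
  ultimately obtain N where N: "of_nat N + of_nat 4 * (a * b) \<in> ?M" "of_nat N - of_nat 4 * (a * b) \<in> ?M"
    unfolding bnd_def by auto
  define r where "r = phi (1 / sqrt (real 4))"
  have r: "r * r * of_nat 4 = 1" unfolding r_def by (rule inv_sq) simp
  have rA: "r \<in> A" unfolding r_def by (rule phiA)
  have "of_nat N + s * (a * b) \<in> ?M" if s: "s = 1 \<or> s = -1" for s
  proof -
    have "of_nat N + s * (of_nat 4 * (a * b)) \<in> ?M" using s N by auto
    then have "r * r * (of_nat N + s * (of_nat 4 * (a * b))) + r * r * of_nat (3 * N) \<in> ?M"
      by (rule qm_gen.add[OF qm_gen.sq[OF rA] qm_gen.sq[OF rA nat_in]])
    also have "r * r * (of_nat N + s * (of_nat 4 * (a * b))) + r * r * of_nat (3 * N)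
       = (r * r * of_nat 4) * (of_nat N + s * (a * b))"
      by (simp add: algebra_simps)
    finally show ?thesis using r by simp
  qed
  from this[of 1] this[of "-1"] show ?thesis unfolding bnd_def by auto
qed

lemma bnd_sum: "finite I \<Longrightarrow> (\<And>i. i \<in> I \<Longrightarrow> bnd (qm_gen A G) (f i)) \<Longrightarrow> bnd (qm_gen A G) (sum f I)"
proof (induction I rule: finite_induct)
  case empty
  have "bnd (qm_gen A G) (phi 0)" by (rule bnd_phi)
  then show ?case by (simp add: phi_zero)
next
  case (insert x F)
  then show ?case by (simp add: bnd_add)
qed

lemma arch_iff: "archimedean_in B M \<longleftrightarrow> (\<forall>a\<in>B. bnd M a)"
  by (simp add: archimedean_in_def bnd_def)

end


lemma lookup_pmap: "f 0 = 0 \<Longrightarrow> Poly_Mapping.lookup (Poly_Mapping.map f p) k = f (Poly_Mapping.lookup p k)"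
  by (simp add: Poly_Mapping.map.rep_eq when_def)

lemma pm_expand: "p = (\<Sum>k\<in>Poly_Mapping.keys p. Poly_Mapping.single k (Poly_Mapping.lookup p k))"
proof (rule poly_mapping_eqI)
  fix x
  have "Poly_Mapping.lookup (\<Sum>k\<in>Poly_Mapping.keys p. Poly_Mapping.single k (Poly_Mapping.lookup p k)) x
      = (\<Sum>k\<in>Poly_Mapping.keys p. if k = x then Poly_Mapping.lookup p k else 0)"
    by (simp add: lookup_sum lookup_single when_def)
  also have "\<dots> = Poly_Mapping.lookup p x"
    by (simp add: sum.delta in_keys_iff)
  finally show "Poly_Mapping.lookup p x = Poly_Mapping.lookup (\<Sum>k\<in>Poly_Mapping.keys p. Poly_Mapping.single k (Poly_Mapping.lookup p k)) x"
    by simp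
qed

lemma single_Mcar: "Poly_Mapping.lookup \<mu> 0 = 0 \<Longrightarrow> Poly_Mapping.single \<mu> c \<in> Mcar"
  by (simp add: Mcar_def)

lemma const_Mcar: "Poly_Mapping.single 0 c \<in> Mcar"
  by (rule single_Mcar) simp

lemma add_Mcar: "a \<in> Mcar \<Longrightarrow> b \<in> Mcar \<Longrightarrow> a + b \<in> Mcar"
  unfolding Mcar_def using keys_add[of a b] by blast

lemma neg_Mcar: "a \<in> Mcar \<Longrightarrow> - a \<in> Mcar"
  unfolding Mcar_def by simp

lemma zero_Mcar: "0 \<in> Mcar"
  unfolding Mcar_def by simp

lemma qms_M: "qmsetup (Mcar :: 'v mring set) (\<lambda>c. Poly_Mapping.single 0 c)"
  by unfold_locales (auto simp: const_Mcar add_Mcar neg_Mcar single_add mult_single)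

lemma add_MXcar: "a \<in> MXcar \<Longrightarrow> b \<in> MXcar \<Longrightarrow> a + b \<in> MXcar"
  unfolding MXcar_def by (simp add: lookup_add add_Mcar)

lemma neg_MXcar: "a \<in> MXcar \<Longrightarrow> - a \<in> MXcar"
  unfolding MXcar_def by (simp add: neg_Mcar)

lemma emb_M_MXcar: "c \<in> Mcar \<Longrightarrow> emb_M c \<in> MXcar"
  unfolding MXcar_def emb_M_def by (simp add: lookup_single when_def zero_Mcar)

lemma lookup_emb_R: "Poly_Mapping.lookup (emb_R g) a = Poly_Mapping.single 0 (Poly_Mapping.lookup g a)"
  unfolding emb_R_def by (simp add: lookup_pmap)

lemma emb_R_MXcar: "emb_R g \<in> MXcar"
  unfolding MXcar_def by (simp add: lookup_emb_R const_Mcar)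

lemma qms_MX: "qmsetup (MXcar :: 'v mxpoly set) (\<lambda>c. Poly_Mapping.single 0 (Poly_Mapping.single 0 c))"
proof unfold_locales
  fix c :: real
  have "Poly_Mapping.single 0 c \<in> (Mcar :: 'v mring set)" by (rule const_Mcar)
  then show "Poly_Mapping.single 0 (Poly_Mapping.single 0 c) \<in> (MXcar :: 'v mxpoly set)"
    using emb_M_MXcar unfolding emb_M_def by blast
qed (auto simp: add_MXcar neg_MXcar single_add mult_single)

lemma emb_R_add: "emb_R (p + q) = emb_R p + emb_R q"
  by (rule poly_mapping_eqI) (simp add: lookup_emb_R lookup_add single_add)

lemma emb_R_neg: "emb_R (- p) = - emb_R p"
  by (rule poly_mapping_eqI) (simp add: lookup_emb_R single_uminus)

lemma emb_R_diff: "emb_R (p - q) = emb_R p - emb_R q"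
  using emb_R_add[of p "- q"] emb_R_neg[of q] by simp

lemma emb_R_zero: "emb_R 0 = 0"
  by (rule poly_mapping_eqI) (simp add: lookup_emb_R)

lemma emb_R_single: "emb_R (Poly_Mapping.single a c) = Poly_Mapping.single a (Poly_Mapping.single 0 c)"
  unfolding emb_R_def by simp

lemma emb_R_sum: "emb_R (sum f I) = (\<Sum>i\<in>I. emb_R (f i))"
  by (induction I rule: infinite_finite_induct) (simp_all add: emb_R_zero emb_R_add)

lemma emb_R_mult: "emb_R (p * q) = emb_R p * emb_R q"
proof -
  let ?P = "Poly_Mapping.keys p" and ?Q = "Poly_Mapping.keys q"
  let ?lp = "Poly_Mapping.lookup p" and ?lq = "Poly_Mapping.lookup q"
  have "p * q = (\<Sum>k\<in>?P. Poly_Mapping.single k (?lp k)) * (\<Sum>l\<in>?Q. Poly_Mapping.single l (?lq l))"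
    using pm_expand[of p] pm_expand[of q] by simp
  also have "\<dots> = (\<Sum>k\<in>?P. \<Sum>l\<in>?Q. Poly_Mapping.single (k + l) (?lp k * ?lq l))"
    by (simp add: sum_product mult_single)
  finally have 1: "emb_R (p * q) = (\<Sum>k\<in>?P. \<Sum>l\<in>?Q. Poly_Mapping.single (k + l) (Poly_Mapping.single 0 (?lp k * ?lq l)))"
    by (simp add: emb_R_sum emb_R_single)
  have "emb_R p * emb_R q = (\<Sum>k\<in>?P. emb_R (Poly_Mapping.single k (?lp k))) * (\<Sum>l\<in>?Q. emb_R (Poly_Mapping.single l (?lq l)))"
    using pm_expand[of p] pm_expand[of q] by (metis emb_R_sum)
  also have "\<dots> = (\<Sum>k\<in>?P. \<Sum>l\<in>?Q. Poly_Mapping.single (k + l) (Poly_Mapping.single 0 (?lp k * ?lq l)))"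
    by (simp add: sum_product mult_single emb_R_single)
  finally show ?thesis using 1 by simp
qed

lemma emb_R_one: "emb_R 1 = 1"
  using emb_R_single[of 0 1] by simp

lemma emb_R_nat: "emb_R (of_nat N) = of_nat N"
  using emb_R_single[of 0 "of_nat N"] by simp

lemma emb_M_add: "emb_M (a + b) = emb_M a + emb_M b"
  unfolding emb_M_def by (simp add: single_add)

lemma emb_M_diff: "emb_M (a - b) = emb_M a - emb_M b"
  unfolding emb_M_def by (simp add: single_diff)

lemma emb_M_mult: "emb_M (a * b) = emb_M a * emb_M b"
  unfolding emb_M_def by (simp add: mult_single)

lemma emb_M_one: "emb_M 1 = 1"
  unfolding emb_M_def by simp

lemma emb_M_nat: "emb_M (of_nat N) = of_nat N"
  unfolding emb_M_def by simp

lemma mlin_superset: "finite K \<Longrightarrow> Poly_Mapping.keys p \<subseteq> K \<Longrightarrow>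
   mlin p = (\<Sum>a\<in>K. Poly_Mapping.lookup p a * mvar a)"
  unfolding mlin_def by (rule sum.mono_neutral_left) (auto simp: in_keys_iff)

lemma mlin_add: "mlin (p + q) = mlin p + mlin q"
proof -
  let ?K = "Poly_Mapping.keys p \<union> Poly_Mapping.keys q"
  have "mlin (p + q) = (\<Sum>a\<in>?K. Poly_Mapping.lookup (p + q) a * mvar a)"
    by (rule mlin_superset) (use keys_add[of p q] in auto)
  also have "\<dots> = (\<Sum>a\<in>?K. Poly_Mapping.lookup p a * mvar a) + (\<Sum>a\<in>?K. Poly_Mapping.lookup q a * mvar a)"
    by (simp add: lookup_add distrib_right sum.distrib)
  also have "\<dots> = mlin p + mlin q"
    by (simp add: mlin_superset[symmetric])
  finally show ?thesis .
qed

lemma mlin_neg: "mlin (- p) = - mlin p"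
  unfolding mlin_def by (simp add: sum_negf)

lemma mlin_single: "mlin (Poly_Mapping.single a c) = c * mvar a"
  unfolding mlin_def by simp



lemma mlin_diff: "mlin (p - q) = mlin p - mlin q"
  using mlin_add[of p "- q"] mlin_neg[of q] by simp

lemma mlin_nat: "mlin (of_nat N) = of_nat N"
proof -
  have "mlin (of_nat N :: 'v mxpoly) = mlin (Poly_Mapping.single 0 (of_nat N))"
    by (simp only: single_of_nat)
  also have "\<dots> = of_nat N" by (simp del: single_of_nat add: mlin_single mvar_def)
  finally show ?thesis .
qed

lemma T1: "q \<in> qm_gen UNIV S \<Longrightarrow> mlin (emb_R (g * g * q)) \<in> qm_M S"
proof (induction q arbitrary: g rule: qm_gen.induct)
  case one
  have "mlin (emb_R g * emb_R g * emb_R 1) \<in> mgens S"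
    unfolding mgens_def using emb_R_MXcar by blast
  then show ?case unfolding qm_M_def by (simp only: emb_R_mult qm_gen.gen)
next
  case (gen s)
  have "mlin (emb_R g * emb_R g * emb_R s) \<in> mgens S"
    unfolding mgens_def using emb_R_MXcar gen by blast
  then show ?case unfolding qm_M_def by (simp only: emb_R_mult qm_gen.gen)
next
  case (add p q)
  have "g * g * (p + q) = g * g * p + g * g * q" by (simp add: distrib_left)
  then have "mlin (emb_R (g * g * (p + q))) = mlin (emb_R (g * g * p)) + mlin (emb_R (g * g * q))"
    by (simp add: emb_R_add mlin_add)
  then show ?case using add.IH[of g] unfolding qm_M_def by (simp add: qm_gen.add)
next
  case (sq a p)
  have eq: "g * g * (a * a * p) = (g * a) * (g * a) * p" by (simp add: ac_simps)
  show ?case unfolding eq by (rule sq.IH)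
qed

lemma T1': "q \<in> qm_gen UNIV S \<Longrightarrow> mlin (emb_R q) \<in> qm_M S"
  using T1[of q S 1] by simp

lemma T2: "q \<in> qm_gen UNIV S \<Longrightarrow> emb_R q \<in> QM_MX S"
proof (induction q rule: qm_gen.induct)
  case one
  then show ?case unfolding QM_MX_def by (simp add: emb_R_one qm_gen.one)
next
  case (gen s)
  then show ?case unfolding QM_MX_def by (simp add: qm_gen.gen)
next
  case (add p q)
  then show ?case unfolding QM_MX_def by (simp add: emb_R_add qm_gen.add)
next
  case (sq a p)
  then show ?case unfolding QM_MX_def by (simp add: emb_R_mult qm_gen.sq emb_R_MXcar)
qed

lemma T3: "c \<in> qm_M S \<Longrightarrow> emb_M c \<in> QM_MX S"
  unfolding qm_M_def
proof (induction c rule: qm_gen.induct)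
  case one
  then show ?case unfolding QM_MX_def by (simp add: emb_M_one qm_gen.one)
next
  case (gen s)
  then show ?case unfolding QM_MX_def by (simp add: qm_gen.gen)
next
  case (add p q)
  then show ?case unfolding QM_MX_def by (simp add: emb_M_add qm_gen.add)
next
  case (sq a p)
  then show ?case unfolding QM_MX_def by (simp add: emb_M_mult qm_gen.sq emb_M_MXcar)
qed

context
  fixes S :: "'v rpoly set"
  assumes arch: "archimedean_in UNIV (QM S)"
begin

lemma arch_q: obtains N where "of_nat N + q \<in> qm_gen UNIV S" "of_nat N - q \<in> qm_gen UNIV S"
  using arch unfolding archimedean_in_def QM_def by blast

lemma bnd_mlin: "bnd (qm_M S) (mlin (emb_R q))"
proof -
  obtain N where N: "of_nat N + q \<in> qm_gen UNIV S" "of_nat N - q \<in> qm_gen UNIV S" by (rule arch_q)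
  have "mlin (emb_R (of_nat N + q)) \<in> qm_M S" "mlin (emb_R (of_nat N - q)) \<in> qm_M S"
    using T1' N by auto
  then show ?thesis unfolding bnd_def
    by (simp add: emb_R_add emb_R_diff emb_R_nat mlin_add mlin_diff mlin_nat) blast
qed

lemma bnd_emb_R: "bnd (QM_MX S) (emb_R q)"
proof -
  obtain N where N: "of_nat N + q \<in> qm_gen UNIV S" "of_nat N - q \<in> qm_gen UNIV S" by (rule arch_q)
  have "emb_R (of_nat N + q) \<in> QM_MX S" "emb_R (of_nat N - q) \<in> QM_MX S"
    using T2 N by auto
  then show ?thesis unfolding bnd_def
    by (simp add: emb_R_add emb_R_diff emb_R_nat) blast
qed

lemma bnd_mvar: "bnd (qm_M S) (mvar a)"
proof -
  have "mlin (emb_R (Poly_Mapping.single a 1)) = mvar a"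
    by (simp add: emb_R_single mlin_single)
  then show ?thesis using bnd_mlin[of "Poly_Mapping.single a 1"] by simp
qed


lemma bnd_pow: "a \<noteq> 0 \<Longrightarrow> bnd (qm_M S) (Poly_Mapping.single (Poly_Mapping.single a n) 1)"
proof (induction n)
  case 0
  show ?case using qmsetup.bnd_phi[OF qms_M, of "mgens S" 1] unfolding qm_M_def by simp
next
  case (Suc n)
  have e: "Poly_Mapping.single (Poly_Mapping.single a (Suc n)) (1::real)
     = mvar a * Poly_Mapping.single (Poly_Mapping.single a n) 1"
    using Suc.prems by (simp add: mvar_def mult_single single_add[symmetric])
  have m1: "mvar a \<in> Mcar" using Suc.prems by (simp add: mvar_def single_Mcar lookup_single)
  have m2: "Poly_Mapping.single (Poly_Mapping.single a n) (1::real) \<in> Mcar"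
    using Suc.prems by (simp add: single_Mcar lookup_single)
  show ?case unfolding e using qmsetup.bnd_mult[OF qms_M m1 m2] bnd_mvar Suc.IH Suc.prems
    unfolding qm_M_def by blast
qed

lemma bnd_monoL: "finite K \<Longrightarrow> 0 \<notin> K \<Longrightarrow>
  bnd (qm_M S) (Poly_Mapping.single (\<Sum>a\<in>K. Poly_Mapping.single a (f a)) 1)"
proof (induction K rule: finite_induct)
  case empty
  show ?case using qmsetup.bnd_phi[OF qms_M, of "mgens S" 1] unfolding qm_M_def by simp
next
  case (insert x F)
  let ?r = "\<Sum>a\<in>F. Poly_Mapping.single a (f a)"
  have e: "Poly_Mapping.single (\<Sum>a\<in>insert x F. Poly_Mapping.single a (f a)) (1::real)
     = Poly_Mapping.single (Poly_Mapping.single x (f x)) 1 * Poly_Mapping.single ?r 1"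
    using insert.hyps by (simp add: mult_single)
  have "Poly_Mapping.lookup ?r 0 = 0"
    using insert.prems by (auto simp: lookup_sum lookup_single when_def intro!: sum.neutral)
  then have m2: "Poly_Mapping.single ?r (1::real) \<in> Mcar" by (rule single_Mcar)
  have m1: "Poly_Mapping.single (Poly_Mapping.single x (f x)) (1::real) \<in> Mcar"
    using insert.prems by (simp add: single_Mcar lookup_single)
  have b1: "bnd (qm_M S) (Poly_Mapping.single (Poly_Mapping.single x (f x)) 1)"
    using bnd_pow insert.prems by simp
  show ?case unfolding e using qmsetup.bnd_mult[OF qms_M m1 m2] b1 insert.IH insert.prems
    unfolding qm_M_def by simp
qed

lemma bnd_Mcar: "p \<in> Mcar \<Longrightarrow> bnd (qm_M S) p"
proof -
  assume p: "p \<in> Mcar"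
  have "bnd (qm_M S) (Poly_Mapping.single \<mu> (Poly_Mapping.lookup p \<mu>))" if mu: "\<mu> \<in> Poly_Mapping.keys p" for \<mu>
  proof -
    have z: "Poly_Mapping.lookup \<mu> 0 = 0" using p mu unfolding Mcar_def by blast
    then have "0 \<notin> Poly_Mapping.keys \<mu>" by (simp add: in_keys_iff)
    then have "bnd (qm_M S) (Poly_Mapping.single (\<Sum>a\<in>Poly_Mapping.keys \<mu>. Poly_Mapping.single a (Poly_Mapping.lookup \<mu> a)) 1)"
      by (intro bnd_monoL) auto
    then have b2: "bnd (qm_M S) (Poly_Mapping.single \<mu> 1)" using pm_expand[of \<mu>] by simp
    have e: "Poly_Mapping.single \<mu> (Poly_Mapping.lookup p \<mu>)
        = Poly_Mapping.single 0 (Poly_Mapping.lookup p \<mu>) * Poly_Mapping.single \<mu> 1"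
      by (simp add: mult_single)
    show ?thesis unfolding e
      using qmsetup.bnd_mult[OF qms_M const_Mcar single_Mcar[OF z]] qmsetup.bnd_phi[OF qms_M] b2
      unfolding qm_M_def by blast
  qed
  then have "bnd (qm_M S) (\<Sum>\<mu>\<in>Poly_Mapping.keys p. Poly_Mapping.single \<mu> (Poly_Mapping.lookup p \<mu>))"
    unfolding qm_M_def by (intro qmsetup.bnd_sum[OF qms_M]) auto
  then show ?thesis using pm_expand[of p] by simp
qed

lemma arch_M: "archimedean_in Mcar (qm_M S)"
  unfolding qmsetup.arch_iff[OF qms_M] using bnd_Mcar by blast

lemma bnd_emb_M: "c \<in> Mcar \<Longrightarrow> bnd (QM_MX S) (emb_M c)"
proof -
  assume "c \<in> Mcar"
  then obtain N where N: "of_nat N + c \<in> qm_M S" "of_nat N - c \<in> qm_M S"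
    using arch_M unfolding archimedean_in_def by blast
  have "emb_M (of_nat N + c) \<in> QM_MX S" "emb_M (of_nat N - c) \<in> QM_MX S"
    using T3 N by auto
  then show ?thesis unfolding bnd_def
    by (simp add: emb_M_add emb_M_diff emb_M_nat) blast
qed

lemma bnd_MXcar: "p \<in> MXcar \<Longrightarrow> bnd (QM_MX S) p"
proof -
  assume p: "p \<in> MXcar"
  have "bnd (QM_MX S) (Poly_Mapping.single a (Poly_Mapping.lookup p a))" for a
  proof -
    have c: "Poly_Mapping.lookup p a \<in> Mcar" using p unfolding MXcar_def by blast
    have e: "Poly_Mapping.single a (Poly_Mapping.lookup p a)
        = emb_M (Poly_Mapping.lookup p a) * emb_R (Poly_Mapping.single a 1)"
      by (simp add: emb_M_def emb_R_single mult_single)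
    show ?thesis unfolding e
      using qmsetup.bnd_mult[OF qms_MX emb_M_MXcar[OF c] emb_R_MXcar] bnd_emb_M[OF c] bnd_emb_R
      unfolding QM_MX_def by blast
  qed
  then have "bnd (QM_MX S) (\<Sum>a\<in>Poly_Mapping.keys p. Poly_Mapping.single a (Poly_Mapping.lookup p a))"
    unfolding QM_MX_def by (intro qmsetup.bnd_sum[OF qms_MX]) auto
  then show ?thesis using pm_expand[of p] by simp
qed

lemma arch_MX: "archimedean_in MXcar (QM_MX S)"
  unfolding qmsetup.arch_iff[OF qms_MX] using bnd_MXcar by blast

end

theorem lemma4p1:
  fixes S :: "('v::finite) rpoly set"
  assumes "archimedean_in UNIV (QM S)"
  shows "archimedean_in Mcar (qm_M S) \<and> archimedean_in MXcar (QM_MX S)"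
  using arch_M[OF assms] arch_MX[OF assms] by blast

end
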